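(* For $1\le p\le n$, with $M_{np}=\chi_n(\pi,p)$ for $\pi$ uniform on $\mathfrak S_n$, $$\mathbb E[M_{np}]=\frac{n+2p-2-H_{p-1}}{n},$$ where $H_m=\sum_{i=1}^m 1/i$ and $H_0=0$.
   Context: $[n]=\{1,\dots,n\}$, $\mathfrak S_n$ the symmetric group on $[n]$, right action $i\pi$, products composed left to right; $\tau(i,j)$ the transposition exchanging $i,j$ ($\tau(n,n)$ the identity). For $\pi\in\mathfrak S_n$ let $q(\pi)=n\pi^{-1}$, and for $n\ge2$ let $\downarrow\pi\in\mathfrak S_{n-1}$ be the restriction to $[n-1]$ of $\tau(n,q(\pi))\pi$. The "number of moves" function $\chi_n(\pi,p)$, $\pi\in\mathfrak S_n$, $p\in[n]$, is defined recursively: $\chi_1(\mathrm{id},1)=1$; for $n\ge2$, with $q=q(\pi)$: $\chi_n(\pi,p)=\chi_{n-1}(\downarrow\pi,p)$ if $p\ne n,p\ne q$; $=1+\chi_{n-1}(\downarrow\pi,q)$ if $p=n\ne q$; $=1$ if $p=q\ne n$; $=1$ if $p=q=n$. *)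

theory Defs
  imports "HOL-Combinatorics.Combinatorics"
begin

text \<open>Permutations of [n] are functions nat => nat with  pi permutes {1..n}.
  The right action i pi is written  pi i ; the product sigma pi (left to right)
  is  pi o sigma .\<close>

definition qpos :: "nat \<Rightarrow> (nat \<Rightarrow> nat) \<Rightarrow> nat" where
  "qpos n \<pi> = inv \<pi> n"

text \<open>down: tau(n,q(pi)) pi, which fixes n and so permutes {1..n-1}.\<close>
definition down :: "nat \<Rightarrow> (nat \<Rightarrow> nat) \<Rightarrow> (nat \<Rightarrow> nat)" where
  "down n \<pi> = \<pi> \<circ> transpose n (qpos n \<pi>)"

fun chi :: "nat \<Rightarrow> (nat \<Rightarrow> nat) \<Rightarrow> nat \<Rightarrow> nat" where
  "chi 0 \<pi> p = 0"
| "chi (Suc 0) \<pi> p = 1"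
| "chi (Suc (Suc m)) \<pi> p =
    (let n = Suc (Suc m); q = qpos n \<pi> in
      if p \<noteq> n \<and> p \<noteq> q then chi (Suc m) (down n \<pi>) p
      else if p = n \<and> p \<noteq> q then 1 + chi (Suc m) (down n \<pi>) q
      else 1)"

end

theory Submission
  imports Defs
begin

lemma decomp:
  assumes "(n::nat) \<ge> 2"
  shows "(\<Sum>\<pi>\<in>{\<pi>. \<pi> permutes {1..n}}. g \<pi>) =
    (\<Sum>q\<in>{1..n}. \<Sum>\<sigma>\<in>{\<sigma>. \<sigma> permutes {1..n-1}}. g (\<sigma> \<circ> transpose n q))"
proof -
  have ins: "{1..n} = insert n {1..n-1}" using assms by auto
  have "(\<Sum>\<pi>\<in>{\<pi>. \<pi> permutes {1..n}}. g \<pi>) = (\<Sum>\<pi>\<in>{\<pi>. \<pi> permutes {1..n}}. g (inv \<pi>))"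
    by (rule sum_permutations_inverse)
  also have "\<dots> = (\<Sum>b\<in>{1..n}. \<Sum>q\<in>{\<sigma>. \<sigma> permutes {1..n-1}}. g (inv (transpose n b \<circ> q)))"
    unfolding ins by (subst sum_over_permutations_insert) auto
  also have "\<dots> = (\<Sum>b\<in>{1..n}. \<Sum>q\<in>{\<sigma>. \<sigma> permutes {1..n-1}}. g (inv q \<circ> transpose n b))"
  proof (intro sum.cong refl)
    fix b q assume "q \<in> {\<sigma>. \<sigma> permutes {1..n-1}}"
    then have "bij q" using permutes_bij by blast
    then show "g (inv (transpose n b \<circ> q)) = g (inv q \<circ> transpose n b)"
      by (simp add: o_inv_distrib)
  qed
  also have "\<dots> = (\<Sum>b\<in>{1..n}. \<Sum>q\<in>{\<sigma>. \<sigma> permutes {1..n-1}}. g (q \<circ> transpose n b))"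
    by (rule sum.cong[OF refl]) (rule sum_permutations_inverse[symmetric])
  finally show ?thesis .
qed

lemma chi_step:
  assumes "\<sigma> permutes {1..Suc m}" "q \<in> {1..Suc (Suc m)}"
  shows "chi (Suc (Suc m)) (\<sigma> \<circ> transpose (Suc (Suc m)) q) p =
    (if p \<noteq> Suc (Suc m) \<and> p \<noteq> q then chi (Suc m) \<sigma> p
     else if p = Suc (Suc m) \<and> p \<noteq> q then 1 + chi (Suc m) \<sigma> q else 1)"
proof -
  let ?n = "Suc (Suc m)"
  have "inv \<sigma> permutes {1..Suc m}" using assms(1) by (rule permutes_inv)
  then have fix1: "inv \<sigma> ?n = ?n" by (simp add: permutes_not_in)
  have "bij \<sigma>" using assms(1) permutes_bij by blast
  then have "inv (\<sigma> \<circ> transpose ?n q) = transpose ?n q \<circ> inv \<sigma>"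
    by (simp add: o_inv_distrib)
  then have qp: "qpos ?n (\<sigma> \<circ> transpose ?n q) = q"
    using fix1 by (simp add: qpos_def)
  have dn: "down ?n (\<sigma> \<circ> transpose ?n q) = \<sigma>"
    unfolding down_def qp by (simp add: comp_assoc)
  show ?thesis by (simp only: chi.simps Let_def qp dn)
qed

definition H :: "nat \<Rightarrow> real" where "H k = (\<Sum>i=1..k. 1 / real i)"

lemma sumH: "(\<Sum>q=1..m. H (q - 1)) = real m * H m - real m"
proof (induction m)
  case 0 then show ?case by (simp add: H_def)
next
  case (Suc m)
  have "H (Suc m) = H m + 1 / real (Suc m)" by (simp add: H_def)
  then show ?case using Suc by (simp add: field_simps)
qed

lemma sumH2: "(\<Sum>q=1..k. 2 * real q - 2 - H (q - 1)) = real k * real k - real k * H k"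
proof (induction k)
  case 0 then show ?case by (simp add: H_def)
next
  case (Suc k)
  have "H (Suc k) = H k + 1 / real (Suc k)" by (simp add: H_def)
  then show ?case using Suc by (simp add: field_simps)
qed

lemma sum_if_eq:
  assumes "finite A" "p \<in> A"
  shows "(\<Sum>q\<in>A. if q = p then a else (b::real)) = a + real (card A - 1) * b"
proof -
  have "(\<Sum>q\<in>A. if q = p then a else b) = a + (\<Sum>q\<in>A - {p}. if q = p then a else b)"
    by (subst sum.remove[OF assms]) simp
  also have "(\<Sum>q\<in>A - {p}. if q = p then a else b) = (\<Sum>q\<in>A - {p}. b)"
    by (rule sum.cong) auto
  finally show ?thesis using assms by simp
qed

lemma mainlem:
  "1 \<le> p \<Longrightarrow> p \<le> Suc m \<Longrightarrow>
   (\<Sum>\<pi>\<in>{\<pi>. \<pi> permutes {1..Suc m}}. real (chi (Suc m) \<pi> p))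
     = fact m * (real (Suc m) + 2 * real p - 2 - H (p - 1))"
proof (induction m arbitrary: p)
  case 0
  have c: "card {\<pi>. \<pi> permutes {1..Suc 0}} = fact 1"
    by (rule card_permutations) auto
  have "p = 1" using 0 by simp
  then show ?case using c by (simp add: H_def)
next
  case (Suc m)
  let ?n = "Suc (Suc m)"
  let ?P = "{\<sigma>. \<sigma> permutes {1..Suc m}}"
  define S where "S q = (\<Sum>\<sigma>\<in>?P. real (chi (Suc m) \<sigma> q))" for q
  have cP: "card ?P = fact (Suc m)"
    by (rule card_permutations) auto
  have finP: "finite ?P" using finite_permutations by blast
  have "(\<Sum>\<pi>\<in>{\<pi>. \<pi> permutes {1..?n}}. real (chi ?n \<pi> p))
     = (\<Sum>q\<in>{1..?n}. \<Sum>\<sigma>\<in>?P. real (chi ?n (\<sigma> \<circ> transpose ?n q) p))"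
    using decomp[of ?n "\<lambda>\<pi>. real (chi ?n \<pi> p)"] by simp
  also have "\<dots> = (\<Sum>q\<in>{1..?n}. \<Sum>\<sigma>\<in>?P. real (if p \<noteq> ?n \<and> p \<noteq> q then chi (Suc m) \<sigma> p
     else if p = ?n \<and> p \<noteq> q then 1 + chi (Suc m) \<sigma> q else 1))"
    by (intro sum.cong refl) (auto simp: chi_step simp del: chi.simps)
  finally have eq: "(\<Sum>\<pi>\<in>{\<pi>. \<pi> permutes {1..?n}}. real (chi ?n \<pi> p))
     = (\<Sum>q\<in>{1..?n}. \<Sum>\<sigma>\<in>?P. real (if p \<noteq> ?n \<and> p \<noteq> q then chi (Suc m) \<sigma> p
     else if p = ?n \<and> p \<noteq> q then 1 + chi (Suc m) \<sigma> q else 1))" .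
  show ?case
  proof (cases "p = ?n")
    case False
    then have pl: "p \<le> Suc m" using Suc.prems by simp
    have "(\<Sum>q\<in>{1..?n}. \<Sum>\<sigma>\<in>?P. real (if p \<noteq> ?n \<and> p \<noteq> q then chi (Suc m) \<sigma> p
     else if p = ?n \<and> p \<noteq> q then 1 + chi (Suc m) \<sigma> q else 1))
      = (\<Sum>q\<in>{1..?n}. if q = p then fact (Suc m) else S p)"
      using False cP by (intro sum.cong refl) (auto simp: S_def algebra_simps)
    also have "\<dots> = fact (Suc m) + real (Suc m) * S p"
      using Suc.prems by (subst sum_if_eq) auto
    also have "S p = fact m * (real (Suc m) + 2 * real p - 2 - H (p - 1))"
      unfolding S_def using Suc.IH[OF Suc.prems(1) pl] .
    moreover have "(fact (Suc m)::real) = real (Suc m) * fact m" by (simp add: algebra_simps)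
    ultimately show ?thesis using eq by (simp add: algebra_simps)
  next
    case True
    have "(\<Sum>q\<in>{1..?n}. \<Sum>\<sigma>\<in>?P. real (if p \<noteq> ?n \<and> p \<noteq> q then chi (Suc m) \<sigma> p
     else if p = ?n \<and> p \<noteq> q then 1 + chi (Suc m) \<sigma> q else 1))
      = (\<Sum>q\<in>{1..?n}. if q = ?n then fact (Suc m) else fact (Suc m) + S q)"
      using True cP finP by (intro sum.cong refl) (auto simp: S_def sum.distrib algebra_simps)
    also have "\<dots> = fact (Suc m) + (\<Sum>q\<in>{1..Suc m}. fact (Suc m) + S q)"
    proof -
      have "{1..?n} = insert ?n {1..Suc m}" by auto
      then show ?thesis by (simp add: sum.insert)
    qed
    also have "(\<Sum>q\<in>{1..Suc m}. fact (Suc m) + S q)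
       = (\<Sum>q\<in>{1..Suc m}. fact (Suc m) + fact m * real (Suc m)
            + fact m * (2 * real q - 2 - H (q - 1)))"
    proof (intro sum.cong refl)
      fix q assume "q \<in> {1..Suc m}"
      then have "S q = fact m * (real (Suc m) + 2 * real q - 2 - H (q - 1))"
        unfolding S_def using Suc.IH by auto
      then show "fact (Suc m) + S q = fact (Suc m) + fact m * real (Suc m)
            + fact m * (2 * real q - 2 - H (q - 1))" by (simp add: algebra_simps)
    qed
    also have "\<dots> = real (Suc m) * (fact (Suc m) + fact m * real (Suc m))
        + fact m * (\<Sum>q=1..Suc m. 2 * real q - 2 - H (q - 1))"
      unfolding sum.distrib sum_distrib_left[symmetric] by simp
    also have "(\<Sum>q=1..Suc m. 2 * real q - 2 - H (q - 1)) = real (Suc m) * real (Suc m) - real (Suc m) * H (Suc m)"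
      by (rule sumH2)
    finally have "(\<Sum>\<pi>\<in>{\<pi>. \<pi> permutes {1..?n}}. real (chi ?n \<pi> p))
       = fact (Suc m) + (real (Suc m) * (fact (Suc m) + fact m * real (Suc m)) +
        fact m * (real (Suc m) * real (Suc m) - real (Suc m) * H (Suc m)))" using eq by simp
    moreover have "fact (Suc m) = real (Suc m) * fact m" by simp
    ultimately show ?thesis using True by (simp add: algebra_simps)
  qed
qed

theorem mainTheorem7:
  fixes n p :: nat
  assumes "1 \<le> p" and "p \<le> n"
  shows "(\<Sum>\<pi>\<in>{\<pi>. \<pi> permutes {1..n}}. real (chi n \<pi> p))
           / real (card {\<pi>. \<pi> permutes {1..n}})
         = (real n + 2 * real p - 2 - (\<Sum>i=1..p-1. 1 / real i)) / real n"
proof -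
  obtain m where n: "n = Suc m" using assms by (cases n) auto
  have c: "card {\<pi>. \<pi> permutes {1..n}} = fact n"
    by (rule card_permutations) auto
  have c': "real (card {\<pi>. \<pi> permutes {1..n}}) = real n * fact m"
    unfolding c using n by (simp add: algebra_simps)
  have s: "(\<Sum>\<pi>\<in>{\<pi>. \<pi> permutes {1..n}}. real (chi n \<pi> p))
     = fact m * (real n + 2 * real p - 2 - H (p - 1))"
    using mainlem[of p m] assms n by simp
  have nz: "(fact m :: real) \<noteq> 0" by simp
  show ?thesis unfolding s c' H_def using nz by simp
qed

end
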